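(* Let $n\ge 3$ and let $I_{B_n}\subset k[x_0,\dots,x_{n+1}]$ be the Stanley-Reisner ideal of the bipyramid complex $B_n$. Then $$I_{B_n}=\bigcap_{S\in\mathcal{T}_{n-2,Q_n}}\left(I_{[0,S]}\cap I_{[n+1,S]}\right),$$ and for every integer $m\ge 1$, $$I_{B_n}^{(m)}=\bigcap_{S\in\mathcal{T}_{n-2,Q_n}}\left(I_{[0,S]}^m\cap I_{[n+1,S]}^m\right).$$
   Context: Let $k$ be a field and $n\ge 3$. The $n$-gon $Q_n$ is the cycle graph on vertices $1,\dots,n$ with edges $\{i,i+1\}$ ($1\le i\le n-1$) and $\{n,1\}$. $B_n$ is the simplicial complex on $\{0,1,\dots,n+1\}$ whose facets are $\{0,i,j\}$ and $\{n+1,i,j\}$ for every edge $\{i,j\}$ of $Q_n$ (the boundary of the bipyramid over $Q_n$). Its Stanley-Reisner ideal $I_{B_n}$ is generated by the monomials $\prod_{i\in\tau}x_i$ for $\tau\subseteq\{0,\dots,n+1\}$ not a face of $B_n$. $\mathcal{T}_{n-2,Q_n}$ denotes the set of subtrees of $Q_n$ with $n-2$ vertices (i.e. sets of $n-2$ vertices of $Q_n$ inducing a tree). For $S\in\mathcal{T}_{n-2,Q_n}$ with vertex set $V(S)$, put $I_{[0,S]}=\langle x_0\rangle+\langle x_i: i\in V(S)\rangle$ and $I_{[n+1,S]}=\langle x_{n+1}\rangle+\langle x_i: i\in V(S)\rangle$. For a homogeneous ideal $I$ of $R=k[x_0,\dots,x_{n+1}]$, $I^{(m)}=R\cap\bigcap_{P\in\mathrm{Ass}(I)}I^mR_P$.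 *)

theory Defs
  imports Main "HOL-Library.Poly_Mapping"
begin

text \<open>Polynomials in variables indexed by nat with coefficients in 'k:
  a polynomial is a finitely supported map from monomials (exponent vectors) to coefficients.\<close>
type_synonym 'k mpoly = "(nat \<Rightarrow>\<^sub>0 nat) \<Rightarrow>\<^sub>0 'k"

definition Var :: "nat \<Rightarrow> 'k::comm_ring_1 mpoly" where
  "Var i = Poly_Mapping.single (Poly_Mapping.single i 1) 1"

text \<open>The ring R = k[x_0,...,x_{n+1}] as a subring (carrier) of the polynomial ring.\<close>
definition Rn :: "nat \<Rightarrow> 'k::comm_ring_1 mpoly set" where
  "Rn n = {p. \<forall>mon \<in> Poly_Mapping.keys p. Poly_Mapping.keys (mon :: nat \<Rightarrow>\<^sub>0 nat) \<subseteq> {0..n+1}}"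

definition is_ideal :: "'a::comm_ring_1 set \<Rightarrow> 'a set \<Rightarrow> bool" where
  "is_ideal R J \<longleftrightarrow> J \<subseteq> R \<and> 0 \<in> J \<and> (\<forall>a\<in>J. \<forall>b\<in>J. a + b \<in> J)
      \<and> (\<forall>r\<in>R. \<forall>a\<in>J. r * a \<in> J)"

definition gen_ideal :: "'a::comm_ring_1 set \<Rightarrow> 'a set \<Rightarrow> 'a set" where
  "gen_ideal R S = \<Inter>{J. is_ideal R J \<and> S \<subseteq> J}"

definition ideal_mult :: "'a::comm_ring_1 set \<Rightarrow> 'a set \<Rightarrow> 'a set \<Rightarrow> 'a set" where
  "ideal_mult R I J = gen_ideal R {a * b | a b. a \<in> I \<and> b \<in> J}"

fun ideal_pow :: "'a::comm_ring_1 set \<Rightarrow> 'a set \<Rightarrow> nat \<Rightarrow> 'a set" where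
  "ideal_pow R I 0 = R"
| "ideal_pow R I (Suc m) = ideal_mult R I (ideal_pow R I m)"

definition prime_ideal :: "'a::comm_ring_1 set \<Rightarrow> 'a set \<Rightarrow> bool" where
  "prime_ideal R P \<longleftrightarrow> is_ideal R P \<and> P \<noteq> R \<and>
      (\<forall>a\<in>R. \<forall>b\<in>R. a * b \<in> P \<longrightarrow> a \<in> P \<or> b \<in> P)"

definition Ass :: "'a::comm_ring_1 set \<Rightarrow> 'a set \<Rightarrow> 'a set set" where
  "Ass R I = {P. prime_ideal R P \<and> (\<exists>g\<in>R. P = {f \<in> R. f * g \<in> I})}"

text \<open>Symbolic power: I^(m) = R \<inter> \<Inter>_{P \<in> Ass I} I^m R_P. Since R is a domain,
  f \<in> I^m R_P iff s f \<in> I^m for some s \<in> R - P.\<close>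
definition symb_pow :: "'a::comm_ring_1 set \<Rightarrow> 'a set \<Rightarrow> nat \<Rightarrow> 'a set" where
  "symb_pow R I m = {f \<in> R. \<forall>P \<in> Ass R I. \<exists>s \<in> R - P. s * f \<in> ideal_pow R I m}"

definition qedge :: "nat \<Rightarrow> nat \<Rightarrow> nat \<Rightarrow> bool" where
  "qedge n i j \<longleftrightarrow> i \<in> {1..n} \<and> j \<in> {1..n} \<and>
     (j = i + 1 \<or> i = j + 1 \<or> (i = n \<and> j = 1) \<or> (i = 1 \<and> j = n))"

definition Bn_face :: "nat \<Rightarrow> nat set \<Rightarrow> bool" where
  "Bn_face n \<tau> \<longleftrightarrow> (\<exists>i j a. qedge n i j \<and> a \<in> {0, n+1} \<and> \<tau> \<subseteq> {a, i, j})"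

definition SR_ideal_Bn :: "nat \<Rightarrow> 'k::comm_ring_1 mpoly set" where
  "SR_ideal_Bn n = gen_ideal (Rn n)
     {\<Prod>i\<in>\<tau>. Var i | \<tau>. \<tau> \<subseteq> {0..n+1} \<and> \<not> Bn_face n \<tau>}"

definition induces_tree :: "nat \<Rightarrow> nat set \<Rightarrow> bool" where
  "induces_tree n V \<longleftrightarrow> V \<subseteq> {1..n} \<and> V \<noteq> {} \<and>
     (\<forall>u\<in>V. \<forall>v\<in>V. (\<lambda>a b. a \<in> V \<and> b \<in> V \<and> qedge n a b)\<^sup>*\<^sup>* u v) \<and>
     card {{i, j} | i j. i \<in> V \<and> j \<in> V \<and> qedge n i j} = card V - 1"

definition subtrees :: "nat \<Rightarrow> nat \<Rightarrow> nat set set" where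
  "subtrees k n = {V. induces_tree n V \<and> card V = k}"

definition I_face :: "nat \<Rightarrow> nat \<Rightarrow> nat set \<Rightarrow> 'k::comm_ring_1 mpoly set" where
  "I_face n a V = gen_ideal (Rn n) (insert (Var a) (Var ` V))"

end

theory Submission
  imports Defs
begin

abbreviation ks where "ks \<equiv> Poly_Mapping.keys"
abbreviation lk where "lk \<equiv> Poly_Mapping.lookup"
abbreviation sg where "sg \<equiv> Poly_Mapping.single"

type_synonym mon = "nat \<Rightarrow>\<^sub>0 nat"

lemma keys_add_nat: "ks ((a::mon) + b) = ks a \<union> ks b"
  by (auto simp: in_keys_iff lookup_add)

lemma keys_diff_sub: "ks ((a::mon) - b) \<subseteq> ks a"
  by (auto simp: in_keys_iff lookup_minus)

lemma poly_decomp: "(p::'a \<Rightarrow>\<^sub>0 'b::comm_monoid_add) = (\<Sum>\<alpha>\<in>ks p. sg \<alpha> (lk p \<alpha>))"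
proof (rule poly_mapping_eqI)
  fix k
  have "lk (\<Sum>\<alpha>\<in>ks p. sg \<alpha> (lk p \<alpha>)) k = (\<Sum>\<alpha>\<in>ks p. if \<alpha> = k then lk p \<alpha> else 0)"
    by (simp add: lookup_sum lookup_single when_def)
  also have "\<dots> = lk p k" by (simp add: sum.delta in_keys_iff)
  finally show "lk p k = lk (\<Sum>\<alpha>\<in>ks p. sg \<alpha> (lk p \<alpha>)) k" by simp
qed

lemma Rn_iff: "p \<in> Rn n \<longleftrightarrow> (\<forall>\<alpha>\<in>ks p. ks \<alpha> \<subseteq> {0..n+1})"
  by (simp add: Rn_def)

lemma Rn_add: "a \<in> Rn n \<Longrightarrow> b \<in> Rn n \<Longrightarrow> a + b \<in> Rn n"
  unfolding Rn_iff
proof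
  fix x assume "\<forall>\<alpha>\<in>ks a. ks \<alpha> \<subseteq> {0..n+1}" "\<forall>\<alpha>\<in>ks b. ks \<alpha> \<subseteq> {0..n+1}" "x \<in> ks (a + b)"
  then show "ks x \<subseteq> {0..n+1}" using keys_add[of a b] by auto
qed

lemma Rn_mult: "(a::'k::comm_ring_1 mpoly) \<in> Rn n \<Longrightarrow> b \<in> Rn n \<Longrightarrow> a * b \<in> Rn n"
  unfolding Rn_iff
proof
  fix x assume A: "\<forall>\<alpha>\<in>ks a. ks \<alpha> \<subseteq> {0..n+1}" "\<forall>\<alpha>\<in>ks b. ks \<alpha> \<subseteq> {0..n+1}" "x \<in> ks (a * b)"
  then obtain u v where "x = u + v" "u \<in> ks a" "v \<in> ks b" using keys_mult[of a b] by blast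
  then show "ks x \<subseteq> {0..n+1}" using A(1,2) keys_add_nat[of u v] by auto
qed

lemma Rn_single: "ks \<alpha> \<subseteq> {0..n+1} \<Longrightarrow> sg \<alpha> c \<in> Rn n"
  unfolding Rn_iff by simp

lemma Rn_one: "(1::'k::comm_ring_1 mpoly) \<in> Rn n"
  unfolding Rn_iff by simp

lemma Rn_zero: "0 \<in> Rn n"
  unfolding Rn_iff by simp

lemma ideal_sum:
  assumes "is_ideal R J" "finite X" "\<forall>x\<in>X. h x \<in> J"
  shows "sum h X \<in> J"
  using assms(2,3)
proof (induction X rule: finite_induct)
  case empty then show ?case using assms(1) by (simp add: is_ideal_def)
next
  case (insert x F) then show ?case using assms(1) by (simp add: is_ideal_def)
qed

lemma gen_ideal_mem: "x \<in> gen_ideal R S \<longleftrightarrow> (\<forall>J. is_ideal R J \<longrightarrow> S \<subseteq> J \<longrightarrow> x \<in> J)"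
  unfolding gen_ideal_def by blast

lemma gen_ideal_least: "is_ideal R J \<Longrightarrow> S \<subseteq> J \<Longrightarrow> gen_ideal R S \<subseteq> J"
  using gen_ideal_mem by blast

lemma gen_ideal_sub: "S \<subseteq> gen_ideal R S"
  using gen_ideal_mem by blast

lemma is_idealD:
  assumes "is_ideal R J"
  shows "J \<subseteq> R" "0 \<in> J" "\<And>a b. a \<in> J \<Longrightarrow> b \<in> J \<Longrightarrow> a + b \<in> J"
    "\<And>r a. r \<in> R \<Longrightarrow> a \<in> J \<Longrightarrow> r * a \<in> J"
  using assms unfolding is_ideal_def by auto

lemma gen_ideal_is_ideal:
  assumes "is_ideal R J0" "S \<subseteq> J0"
  shows "is_ideal R (gen_ideal R S)"
  unfolding is_ideal_def
proof (intro conjI ballI)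
  show "gen_ideal R S \<subseteq> R"
    using gen_ideal_least[OF assms] is_idealD(1)[OF assms(1)] by blast
  show "0 \<in> gen_ideal R S" unfolding gen_ideal_mem using is_idealD(2) by blast
  fix a b assume "a \<in> gen_ideal R S" "b \<in> gen_ideal R S"
  then show "a + b \<in> gen_ideal R S" unfolding gen_ideal_mem using is_idealD(3) by blast
next
  fix r a assume "r \<in> R" "a \<in> gen_ideal R S"
  then show "r * a \<in> gen_ideal R S" unfolding gen_ideal_mem using is_idealD(4) by blast
qed

definition upc :: "mon set \<Rightarrow> bool" where
  "upc U \<longleftrightarrow> (\<forall>\<alpha> \<beta>. \<alpha> \<in> U \<longrightarrow> \<alpha> + \<beta> \<in> U)"

definition MI :: "nat \<Rightarrow> mon set \<Rightarrow> 'k::comm_ring_1 mpoly set" where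
  "MI n U = {f \<in> Rn n. ks f \<subseteq> U}"

lemma MI_ideal:
  assumes "upc U"
  shows "is_ideal (Rn n) (MI n U :: 'k::comm_ring_1 mpoly set)"
  unfolding is_ideal_def
proof (intro conjI ballI)
  show "MI n U \<subseteq> Rn n" by (auto simp: MI_def)
  show "0 \<in> (MI n U :: 'k mpoly set)" by (simp add: MI_def Rn_zero)
  fix a b :: "'k mpoly" assume "a \<in> MI n U" "b \<in> MI n U"
  then have ab: "a \<in> Rn n" "b \<in> Rn n" "ks a \<subseteq> U" "ks b \<subseteq> U" unfolding MI_def by auto
  then have "ks (a + b) \<subseteq> U" using keys_add[of a b] by blast
  then show "a + b \<in> MI n U" unfolding MI_def using Rn_add[OF ab(1,2)] by blast
next
  fix r a :: "'k mpoly" assume r: "r \<in> Rn n" and a: "a \<in> MI n U"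
  have "ks (r * a) \<subseteq> U"
  proof
    fix x assume "x \<in> ks (r * a)"
    then obtain u v where uv: "x = u + v" "u \<in> ks r" "v \<in> ks a" using keys_mult[of r a] by blast
    have "v \<in> U" using a uv(3) unfolding MI_def by blast
    then have "v + u \<in> U" using assms unfolding upc_def by blast
    then show "x \<in> U" unfolding uv(1) by (subst add.commute)
  qed
  then show "r * a \<in> MI n U" using r a Rn_mult[of r n a] unfolding MI_def by blast
qed

lemma MI_eq_gen:
  fixes S :: "'k::comm_ring_1 mpoly set"
  assumes up: "upc U" and sub: "S \<subseteq> MI n U"
    and gen: "\<And>\<alpha> c. ks \<alpha> \<subseteq> {0..n+1} \<Longrightarrow> \<alpha> \<in> U \<Longrightarrow> sg \<alpha> c \<in> gen_ideal (Rn n) S"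
  shows "gen_ideal (Rn n) S = MI n U"
proof
  show "gen_ideal (Rn n) S \<subseteq> MI n U" using gen_ideal_least[OF MI_ideal[OF up] sub] .
  show "MI n U \<subseteq> gen_ideal (Rn n) S"
  proof
    fix f :: "'k mpoly" assume f: "f \<in> MI n U"
    have id: "is_ideal (Rn n) (gen_ideal (Rn n) S)"
      using gen_ideal_is_ideal[OF MI_ideal[OF up] sub] .
    have "\<forall>\<alpha>\<in>ks f. sg \<alpha> (lk f \<alpha>) \<in> gen_ideal (Rn n) S"
    proof
      fix \<alpha> assume "\<alpha> \<in> ks f"
      then have "ks \<alpha> \<subseteq> {0..n+1}" "\<alpha> \<in> U" using f unfolding MI_def Rn_iff by blast+
      then show "sg \<alpha> (lk f \<alpha>) \<in> gen_ideal (Rn n) S" by (rule gen)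
    qed
    then have "(\<Sum>\<alpha>\<in>ks f. sg \<alpha> (lk f \<alpha>)) \<in> gen_ideal (Rn n) S"
      by (rule ideal_sum[OF id finite_keys])
    then show "f \<in> gen_ideal (Rn n) S"
      using back_subst[where P="\<lambda>x. x \<in> gen_ideal (Rn n) S", OF _ poly_decomp[of f, symmetric]] by blast
  qed
qed

lemma single_split:
  "sg ((\<alpha>::mon) + \<beta>) (c::'k::comm_ring_1) = sg \<alpha> c * sg \<beta> 1"
  by (simp add: mult_single)

lemma single_gen:
  assumes id: "is_ideal (Rn n) J" and b: "sg \<beta> 1 \<in> J" and ka: "ks \<alpha> \<subseteq> {0..n+1}"
  shows "sg (\<alpha> + \<beta>) (c::'k::comm_ring_1) \<in> J"
  unfolding single_split[of \<alpha> \<beta> c] by (rule is_idealD(4)[OF id Rn_single[OF ka, of c] b])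

lemma keys_single_sub: "ks (sg u c) \<subseteq> {u}" by simp

definition plusset :: "mon set \<Rightarrow> mon set \<Rightarrow> mon set" where
  "plusset U W = {u + w | u w. u \<in> U \<and> w \<in> W}"

lemma upc_plusset: assumes "upc U" shows "upc (plusset U W)"
  unfolding upc_def
proof (intro allI impI)
  fix \<alpha> \<beta> assume "\<alpha> \<in> plusset U W"
  then obtain u w where uw: "\<alpha> = u + w" "u \<in> U" "w \<in> W" unfolding plusset_def by blast
  have "\<alpha> + \<beta> = (u + \<beta>) + w" unfolding uw(1) by (simp only: add.assoc add.commute add.left_commute)
  moreover have "u + \<beta> \<in> U" using assms uw(2) unfolding upc_def by blast
  ultimately show "\<alpha> + \<beta> \<in> plusset U W" using uw(3) unfolding plusset_def by blast
qed

lemma ideal_mult_MI: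
  assumes "upc U" "upc W"
  shows "ideal_mult (Rn n) (MI n U :: 'k::comm_ring_1 mpoly set) (MI n W) = MI n (plusset U W)"
  unfolding ideal_mult_def
proof (rule MI_eq_gen)
  show "upc (plusset U W)" using upc_plusset[OF assms(1)] .
  show "{a * b |a b. a \<in> (MI n U :: 'k mpoly set) \<and> b \<in> MI n W} \<subseteq> MI n (plusset U W)"
  proof clarify
    fix a b :: "'k mpoly" assume a: "a \<in> MI n U" and b: "b \<in> MI n W"
    have "ks (a * b) \<subseteq> plusset U W"
    proof
      fix x assume "x \<in> ks (a * b)"
      then obtain u v where "x = u + v" "u \<in> ks a" "v \<in> ks b" using keys_mult[of a b] by blast
      then show "x \<in> plusset U W" using a b unfolding MI_def plusset_def by blast
    qed
    then show "a * b \<in> MI n (plusset U W)" using a b Rn_mult[of a n b] unfolding MI_def by blast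
  qed
  fix \<alpha> :: mon and c :: 'k
  assume ka: "ks \<alpha> \<subseteq> {0..n+1}" and au: "\<alpha> \<in> plusset U W"
  then obtain u w where uw: "\<alpha> = u + w" "u \<in> U" "w \<in> W" by (auto simp: plusset_def)
  have ku: "ks u \<subseteq> {0..n+1}" and kw: "ks w \<subseteq> {0..n+1}" using ka uw(1) keys_add_nat[of u w] by auto
  have "sg u c \<in> (MI n U :: 'k mpoly set)" using Rn_single[OF ku, of c] uw(2) keys_single_sub[of u c] unfolding MI_def by blast
  moreover have "sg w 1 \<in> (MI n W :: 'k mpoly set)" using Rn_single[OF kw, of 1] uw(3) keys_single_sub[of w 1] unfolding MI_def by blast
  ultimately have mem: "sg u c * sg w 1 \<in> {a * b |a b. a \<in> (MI n U :: 'k mpoly set) \<and> b \<in> MI n W}" by blast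
  have "sg \<alpha> c = sg u c * sg w 1" unfolding uw(1) by (rule single_split)
  then show "sg \<alpha> c \<in> gen_ideal (Rn n) {a * b |a b. a \<in> (MI n U :: 'k mpoly set) \<and> b \<in> MI n W}"
    using subsetD[OF gen_ideal_sub mem] by (simp only:)
qed

fun pw :: "mon set \<Rightarrow> nat \<Rightarrow> mon set" where
  "pw U 0 = UNIV"
| "pw U (Suc m) = plusset U (pw U m)"

lemma upc_pw: assumes "upc U" shows "upc (pw U m)"
proof (induction m)
  case 0 show ?case by (simp add: upc_def)
next
  case (Suc m) show ?case using upc_plusset[OF assms] by simp
qed

lemma MI_UNIV: "MI n UNIV = Rn n"
  by (auto simp: MI_def)

lemma ideal_pow_MI:
  assumes "upc U"
  shows "ideal_pow (Rn n) (MI n U :: 'k::comm_ring_1 mpoly set) m = MI n (pw U m)"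
proof (induction m)
  case 0 show ?case by (simp add: MI_UNIV)
next
  case (Suc m)
  have "ideal_pow (Rn n) (MI n U :: 'k mpoly set) (Suc m) = ideal_mult (Rn n) (MI n U) (MI n (pw U m))"
    using Suc by simp
  also have "\<dots> = MI n (plusset U (pw U m))" using ideal_mult_MI[OF assms upc_pw[OF assms]] by blast
  finally show ?case by simp
qed

lemma plusset_mono: "U \<subseteq> U' \<Longrightarrow> W \<subseteq> W' \<Longrightarrow> plusset U W \<subseteq> plusset U' W'"
  unfolding plusset_def by blast

lemma pw_mono: "U \<subseteq> W \<Longrightarrow> pw U m \<subseteq> pw W m"
proof (induction m)
  case 0 show ?case by simp
next
  case (Suc m) then show ?case using plusset_mono by simp
qed

lemma MI_mono: "U \<subseteq> W \<Longrightarrow> MI n U \<subseteq> MI n W"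
  by (auto simp: MI_def)


definition deg :: "nat set \<Rightarrow> mon \<Rightarrow> nat" where "deg A \<alpha> = (\<Sum>i\<in>A. lk \<alpha> i)"

lemma deg_add: "deg A (\<alpha> + \<beta>) = deg A \<alpha> + deg A \<beta>"
  unfolding deg_def lookup_add by (rule sum.distrib)

lemma deg_pos_iff: assumes fin: "finite A" shows "0 < deg A \<alpha> \<longleftrightarrow> ks \<alpha> \<inter> A \<noteq> {}"
proof -
  have "deg A \<alpha> = 0 \<longleftrightarrow> (\<forall>i\<in>A. lk \<alpha> i = 0)" unfolding deg_def using fin by simp
  also have "\<dots> \<longleftrightarrow> ks \<alpha> \<inter> A = {}" by (auto simp: in_keys_iff)
  finally show ?thesis by auto
qed

lemma deg_single: "finite A \<Longrightarrow> deg A (sg i 1) = (if i \<in> A then 1 else 0)"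
  unfolding deg_def lookup_single when_def by (simp add: sum.delta sum.delta')

definition Dg :: "nat set \<Rightarrow> nat \<Rightarrow> mon set" where "Dg A k = {\<alpha>. k \<le> deg A \<alpha>}"

lemma upc_Dg: "upc (Dg A k)"
  unfolding upc_def Dg_def by (simp add: deg_add)

lemma unit_split: assumes "lk (\<alpha>::mon) i \<noteq> 0" shows "\<alpha> = sg i 1 + (\<alpha> - sg i 1)"
proof (rule poly_mapping_eqI)
  fix k show "lk \<alpha> k = lk (sg i 1 + (\<alpha> - sg i 1)) k"
  proof (cases "k = i")
    case True
    have "lk (sg i 1 + (\<alpha> - sg i 1)) k = 1 + (lk \<alpha> i - 1)"
      using True by (simp add: lookup_add lookup_minus)
    also have "\<dots> = lk \<alpha> i" using assms by linarith
    finally show ?thesis using True by simp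
  next
    case False then show ?thesis by (simp add: lookup_add lookup_minus lookup_single_not_eq)
  qed
qed

lemma unit_split': assumes "lk (\<alpha>::mon) i \<noteq> 0" shows "\<alpha> = (\<alpha> - sg i 1) + sg i 1"
proof -
  have "\<alpha> = sg i 1 + (\<alpha> - sg i 1)" by (rule unit_split[OF assms])
  also have "\<dots> = (\<alpha> - sg i 1) + sg i 1" by (rule add.commute)
  finally show ?thesis .
qed

lemma deg_split: assumes "lk (\<alpha>::mon) i \<noteq> 0" shows "deg A \<alpha> = deg A (sg i 1) + deg A (\<alpha> - sg i 1)"
proof -
  have "deg A \<alpha> = deg A (sg i 1 + (\<alpha> - sg i 1))" by (rule arg_cong[OF unit_split[OF assms]])
  also have "\<dots> = deg A (sg i 1) + deg A (\<alpha> - sg i 1)" by (rule deg_add)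
  finally show ?thesis .
qed

lemma exists_var:
  assumes "finite A" "1 \<le> deg A \<alpha>"
  obtains i where "i \<in> A" "lk \<alpha> i \<noteq> 0"
  using assms deg_pos_iff[of A \<alpha>] by (auto simp: in_keys_iff)

lemma pw_Dg: assumes fin: "finite A" shows "pw (Dg A 1) m = Dg A m"
proof (induction m)
  case 0 show ?case by (simp add: Dg_def)
next
  case (Suc m)
  have "plusset (Dg A 1) (Dg A m) = Dg A (Suc m)"
  proof
    show "plusset (Dg A 1) (Dg A m) \<subseteq> Dg A (Suc m)"
    proof
      fix x assume "x \<in> plusset (Dg A 1) (Dg A m)"
      then obtain u w where uw: "x = u + w" "u \<in> Dg A 1" "w \<in> Dg A m" unfolding plusset_def by blast
      have "deg A x = deg A u + deg A w" unfolding uw(1) by (rule deg_add)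
      then show "x \<in> Dg A (Suc m)" using uw(2,3) unfolding Dg_def by simp
    qed
    show "Dg A (Suc m) \<subseteq> plusset (Dg A 1) (Dg A m)"
    proof
      fix x assume x: "x \<in> Dg A (Suc m)"
      then have "1 \<le> deg A x" unfolding Dg_def by simp
      then obtain i where i: "i \<in> A" "lk x i \<noteq> 0" using exists_var[OF fin] by blast
      have e: "x = sg i 1 + (x - sg i 1)" using unit_split[OF i(2)] .
      have "deg A x = 1 + deg A (x - sg i 1)"
        using deg_split[OF i(2), of A] deg_single[OF fin, of i] i(1) by simp
      then have "x - sg i 1 \<in> Dg A m" using x unfolding Dg_def by simp
      moreover have "sg i 1 \<in> Dg A 1" using deg_single[OF fin, of i] i(1) unfolding Dg_def by simp
      ultimately show "x \<in> plusset (Dg A 1) (Dg A m)" using e unfolding plusset_def by blast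
    qed
  qed
  then show ?case using Suc by simp
qed

lemma ideal_pow_Dg:
  "finite A \<Longrightarrow> ideal_pow (Rn n) (MI n (Dg A 1) :: 'k::comm_ring_1 mpoly set) m = MI n (Dg A m)"
  using ideal_pow_MI[OF upc_Dg, of n A 1 m] pw_Dg[of A m] by simp

lemma keys_sg_unit: "ks (sg i (1::nat)) = {i}" by simp

lemma Var_MI:
  assumes A: "A \<subseteq> {0..n+1}"
  shows "gen_ideal (Rn n) (Var ` A) = (MI n (Dg A 1) :: 'k::comm_ring_1 mpoly set)"
proof (rule MI_eq_gen[OF upc_Dg])
  have fin: "finite A" using A finite_subset by blast
  show sub: "(Var ` A :: 'k mpoly set) \<subseteq> MI n (Dg A 1)"
  proof
    fix x :: "'k mpoly" assume "x \<in> Var ` A"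
    then obtain i where i: "i \<in> A" "x = Var i" by blast
    have "ks (sg i (1::nat)) \<subseteq> {0..n+1}" using i(1) A by auto
    then have "x \<in> Rn n" using i(2) Rn_single unfolding Var_def by blast
    moreover have "ks x \<subseteq> Dg A 1" using i deg_single[OF fin, of i] unfolding Var_def Dg_def by simp
    ultimately show "x \<in> MI n (Dg A 1)" unfolding MI_def by blast
  qed
  have id: "is_ideal (Rn n) (gen_ideal (Rn n) (Var ` A :: 'k mpoly set))"
    using gen_ideal_is_ideal[OF MI_ideal[OF upc_Dg] sub] .
  fix \<alpha> :: mon and c :: 'k
  assume ka: "ks \<alpha> \<subseteq> {0..n+1}" and a: "\<alpha> \<in> Dg A 1"
  then have "1 \<le> deg A \<alpha>" unfolding Dg_def by simp
  then obtain i where i: "i \<in> A" "lk \<alpha> i \<noteq> 0" using exists_var[OF fin] by blast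
  have e: "\<alpha> = (\<alpha> - sg i 1) + sg i 1" using unit_split'[OF i(2)] .
  have k2: "ks (\<alpha> - sg i 1) \<subseteq> {0..n+1}" using keys_diff_sub[of \<alpha> "sg i 1"] ka by blast
  have "sg (sg i 1) 1 \<in> gen_ideal (Rn n) (Var ` A :: 'k mpoly set)"
    using gen_ideal_sub[of "Var ` A :: 'k mpoly set" "Rn n"] i(1) unfolding Var_def by blast
  then have "sg ((\<alpha> - sg i 1) + sg i 1) c \<in> gen_ideal (Rn n) (Var ` A :: 'k mpoly set)"
    by (rule single_gen[OF id _ k2])
  moreover have "sg \<alpha> c = sg ((\<alpha> - sg i 1) + sg i 1) c" by (rule arg_cong[OF e])
  ultimately show "sg \<alpha> c \<in> gen_ideal (Rn n) (Var ` A :: 'k mpoly set)" by (simp only:)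
qed

definition ind :: "nat set \<Rightarrow> mon" where "ind \<tau> = (\<Sum>i\<in>\<tau>. sg i 1)"

lemma lookup_ind: "finite \<tau> \<Longrightarrow> lk (ind \<tau>) j = (if j \<in> \<tau> then 1 else 0)"
  unfolding ind_def lookup_sum lookup_single when_def by (simp add: sum.delta')

lemma keys_ind: "finite \<tau> \<Longrightarrow> ks (ind \<tau>) = \<tau>"
  by (auto simp: in_keys_iff lookup_ind split: if_splits)

lemma prod_Var: "finite \<tau> \<Longrightarrow> (\<Prod>i\<in>\<tau>. Var i) = (sg (ind \<tau>) 1 :: 'k::comm_ring_1 mpoly)"
proof (induction \<tau> rule: finite_induct)
  case empty then show ?case by (simp add: ind_def one_poly_mapping.abs_eq)
next
  case (insert x F)
  have "(\<Prod>i\<in>insert x F. Var i) = (Var x :: 'k mpoly) * sg (ind F) 1"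
    using insert by simp
  also have "\<dots> = sg (sg x 1 + ind F) 1" unfolding Var_def mult_single by simp
  also have "sg x 1 + ind F = ind (insert x F)" unfolding ind_def using insert by simp
  finally show ?case .
qed


definition NF :: "nat \<Rightarrow> mon set" where
  "NF n = {\<alpha>. \<not> Bn_face n (ks \<alpha> \<inter> {0..n+1})}"

lemma Bn_face_mono: "Bn_face n T \<Longrightarrow> T' \<subseteq> T \<Longrightarrow> Bn_face n T'"
  unfolding Bn_face_def by blast

lemma upc_NF: "upc (NF n)"
  unfolding upc_def NF_def
proof (intro allI impI, clarify)
  fix \<alpha> \<beta> :: mon assume a: "\<not> Bn_face n (ks \<alpha> \<inter> {0..n+1})" and b: "Bn_face n (ks (\<alpha> + \<beta>) \<inter> {0..n+1})"
  have "ks \<alpha> \<inter> {0..n+1} \<subseteq> ks (\<alpha> + \<beta>) \<inter> {0..n+1}" using keys_add_nat[of \<alpha> \<beta>] by blast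
  then show False using a b Bn_face_mono by blast
qed

lemma ind_split:
  assumes "finite \<tau>" "\<tau> \<subseteq> ks (\<alpha>::mon)"
  shows "\<alpha> = (\<alpha> - ind \<tau>) + ind \<tau>"
proof (rule poly_mapping_eqI)
  fix k
  show "lk \<alpha> k = lk ((\<alpha> - ind \<tau>) + ind \<tau>) k"
  proof (cases "k \<in> \<tau>")
    case True
    then have "lk \<alpha> k \<noteq> 0" using assms(2) by (auto simp: in_keys_iff)
    moreover have "lk ((\<alpha> - ind \<tau>) + ind \<tau>) k = (lk \<alpha> k - 1) + 1"
      using True assms(1) by (simp add: lookup_add lookup_minus lookup_ind)
    ultimately show ?thesis by linarith
  next
    case False
    then show ?thesis using assms(1) by (simp add: lookup_add lookup_minus lookup_ind)
  qed
qed

lemma prod_in_gens: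
  assumes "finite \<tau>" "\<tau> \<subseteq> {0..n+1}" "\<not> Bn_face n \<tau>"
  shows "(sg (ind \<tau>) 1 :: 'k::comm_ring_1 mpoly) \<in> {\<Prod>i\<in>\<tau>. Var i | \<tau>. \<tau> \<subseteq> {0..n+1} \<and> \<not> Bn_face n \<tau>}"
proof -
  have pv: "(\<Prod>i\<in>\<tau>. Var i :: 'k mpoly) = sg (ind \<tau>) 1" by (rule prod_Var[OF assms(1)])
  show ?thesis unfolding pv[symmetric] using assms(2,3) by blast
qed

lemma SR_MI: "SR_ideal_Bn n = (MI n (NF n) :: 'k::comm_ring_1 mpoly set)"
  unfolding SR_ideal_Bn_def
proof (rule MI_eq_gen[OF upc_NF])
  let ?G = "{\<Prod>i\<in>\<tau>. Var i | \<tau>. \<tau> \<subseteq> {0..n+1} \<and> \<not> Bn_face n \<tau>} :: 'k mpoly set"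
  show sub: "?G \<subseteq> MI n (NF n)"
  proof
    fix x assume "x \<in> ?G"
    then obtain \<tau> where t: "x = (\<Prod>i\<in>\<tau>. Var i)" "\<tau> \<subseteq> {0..n+1}" "\<not> Bn_face n \<tau>" by blast
    have fin: "finite \<tau>" using t(2) finite_subset by blast
    have x: "x = sg (ind \<tau>) 1" using t(1) prod_Var[OF fin] by simp
    have k: "ks (ind \<tau>) = \<tau>" using keys_ind[OF fin] .
    have "x \<in> Rn n" unfolding x using Rn_single[of "ind \<tau>" n 1] k t(2) by simp
    moreover have "ind \<tau> \<in> NF n" unfolding NF_def using k t(2,3)
      by (simp add: Int_absorb2)
    moreover have "ks x \<subseteq> {ind \<tau>}" unfolding x by simp
    ultimately show "x \<in> MI n (NF n)" unfolding MI_def by blast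
  qed
  have id: "is_ideal (Rn n) (gen_ideal (Rn n) ?G)"
    using gen_ideal_is_ideal[OF MI_ideal[OF upc_NF] sub] .
  fix \<alpha> :: mon and c :: 'k
  assume ka: "ks \<alpha> \<subseteq> {0..n+1}" and a: "\<alpha> \<in> NF n"
  define \<tau> where "\<tau> = ks \<alpha>"
  have fin: "finite \<tau>" unfolding \<tau>_def by simp
  have nf: "\<not> Bn_face n \<tau>" using a ka unfolding NF_def \<tau>_def by (simp add: Int_absorb2)
  have e: "\<alpha> = (\<alpha> - ind \<tau>) + ind \<tau>" by (rule ind_split[OF fin]) (simp add: \<tau>_def)
  have k2: "ks (\<alpha> - ind \<tau>) \<subseteq> {0..n+1}" using keys_diff_sub[of \<alpha> "ind \<tau>"] ka by blast
  have tV: "\<tau> \<subseteq> {0..n+1}" using ka unfolding \<tau>_def .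
  have "sg (ind \<tau>) 1 \<in> ?G" by (rule prod_in_gens[OF fin tV nf])
  then have "sg (ind \<tau>) 1 \<in> gen_ideal (Rn n) ?G" by (rule subsetD[OF gen_ideal_sub])
  then have "sg ((\<alpha> - ind \<tau>) + ind \<tau>) c \<in> gen_ideal (Rn n) ?G"
    by (rule single_gen[OF id _ k2])
  moreover have "sg \<alpha> c = sg ((\<alpha> - ind \<tau>) + ind \<tau>) c" by (rule arg_cong[OF e])
  ultimately show "sg \<alpha> c \<in> gen_ideal (Rn n) ?G" by (simp only:)
qed

lemma mult_shift_sum:
  "(f :: 'k::comm_ring_1 mpoly) * sg \<gamma> 1 = (\<Sum>\<beta>\<in>ks f. sg (\<beta> + \<gamma>) (lk f \<beta>))"
proof -
  have "f * sg \<gamma> 1 = (\<Sum>\<beta>\<in>ks f. sg \<beta> (lk f \<beta>)) * sg \<gamma> 1"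
    by (rule arg_cong[OF poly_decomp[of f]])
  also have "\<dots> = (\<Sum>\<beta>\<in>ks f. sg \<beta> (lk f \<beta>) * sg \<gamma> 1)" by (rule sum_distrib_right)
  also have "\<dots> = (\<Sum>\<beta>\<in>ks f. sg (\<beta> + \<gamma>) (lk f \<beta>))" by (simp add: mult_single)
  finally show ?thesis .
qed

lemma lookup_shift: "lk ((f :: 'k::comm_ring_1 mpoly) * sg \<gamma> 1) (\<alpha> + \<gamma>) = lk f \<alpha>"
proof -
  have "lk (f * sg \<gamma> 1) (\<alpha> + \<gamma>) = (\<Sum>\<beta>\<in>ks f. (lk f \<beta> when \<beta> + \<gamma> = \<alpha> + \<gamma>))"
    unfolding mult_shift_sum lookup_sum lookup_single by simp
  also have "\<dots> = (\<Sum>\<beta>\<in>ks f. (if \<beta> = \<alpha> then lk f \<beta> else 0))"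
    by (rule sum.cong) (simp_all add: when_def)
  also have "\<dots> = lk f \<alpha>" by (simp add: sum.delta' in_keys_iff)
  finally show ?thesis .
qed

lemma keys_shift: "ks ((f :: 'k::comm_ring_1 mpoly) * sg \<gamma> 1) = (\<lambda>\<alpha>. \<alpha> + \<gamma>) ` ks f"
proof
  show "ks (f * sg \<gamma> 1) \<subseteq> (\<lambda>\<alpha>. \<alpha> + \<gamma>) ` ks f"
  proof
    fix x assume "x \<in> ks (f * sg \<gamma> 1)"
    then obtain a b where ab: "x = a + b" "a \<in> ks f" "b \<in> ks (sg \<gamma> (1::'k))" using keys_mult[of f "sg \<gamma> 1"] by blast
    have "b = \<gamma>" using ab(3) by simp
    then show "x \<in> (\<lambda>\<alpha>. \<alpha> + \<gamma>) ` ks f" using ab(1,2) by blast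
  qed
  show "(\<lambda>\<alpha>. \<alpha> + \<gamma>) ` ks f \<subseteq> ks (f * sg \<gamma> 1)"
  proof
    fix x assume "x \<in> (\<lambda>\<alpha>. \<alpha> + \<gamma>) ` ks f"
    then obtain a where a: "x = a + \<gamma>" "a \<in> ks f" by blast
    have "lk (f * sg \<gamma> 1) (a + \<gamma>) \<noteq> 0" unfolding lookup_shift using a(2) by (simp add: in_keys_iff)
    then show "x \<in> ks (f * sg \<gamma> 1)" using a(1) by (simp add: in_keys_iff)
  qed
qed

definition filt :: "(mon \<Rightarrow> bool) \<Rightarrow> 'k::comm_ring_1 mpoly \<Rightarrow> 'k mpoly" where
  "filt Q p = (\<Sum>\<alpha>\<in>{\<alpha>\<in>ks p. Q \<alpha>}. sg \<alpha> (lk p \<alpha>))"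

lemma lookup_filt: "lk (filt Q p) k = (if Q k then lk p k else 0)"
proof -
  have "lk (filt Q p) k = (\<Sum>\<alpha>\<in>{\<alpha>\<in>ks p. Q \<alpha>}. if \<alpha> = k then lk p \<alpha> else 0)"
    unfolding filt_def lookup_sum lookup_single when_def by (rule sum.cong) auto
  also have "\<dots> = (if k \<in> {\<alpha>\<in>ks p. Q \<alpha>} then lk p k else 0)" by (rule sum.delta) simp
  also have "\<dots> = (if Q k then lk p k else 0)" by (auto simp: in_keys_iff)
  finally show ?thesis .
qed

lemma keys_filt: "ks (filt Q p) = {\<alpha>\<in>ks p. Q \<alpha>}"
  by (auto simp: in_keys_iff lookup_filt split: if_splits)

lemma filt_split: "p = filt Q p + filt (\<lambda>\<alpha>. \<not> Q \<alpha>) p"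
  by (rule poly_mapping_eqI) (simp add: lookup_add lookup_filt)

lemma primary:
  fixes s f :: "'k::field mpoly"
  assumes A: "finite A" and a0: "\<alpha>0 \<in> ks s" "deg A \<alpha>0 = 0"
    and b0: "\<beta>0 \<in> ks f" "deg A \<beta>0 < m"
  shows "\<exists>\<gamma>\<in>ks (s * f). deg A \<gamma> < m"
proof -
  define d where "d = Min (deg A ` ks f)"
  have fk: "finite (deg A ` ks f)" by simp
  have d_le: "\<And>\<beta>. \<beta> \<in> ks f \<Longrightarrow> d \<le> deg A \<beta>" unfolding d_def using fk by simp
  have dm: "d < m" using d_le[OF b0(1)] b0(2) by linarith
  have "d \<in> deg A ` ks f" unfolding d_def using fk b0(1) by (intro Min_in) auto
  then obtain \<beta>1 where b1: "\<beta>1 \<in> ks f" "deg A \<beta>1 = d" by blast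
  define s0 where "s0 = filt (\<lambda>\<alpha>. deg A \<alpha> = 0) s"
  define s1 where "s1 = filt (\<lambda>\<alpha>. \<not> deg A \<alpha> = 0) s"
  define f0 where "f0 = filt (\<lambda>\<alpha>. deg A \<alpha> = d) f"
  define f1 where "f1 = filt (\<lambda>\<alpha>. \<not> deg A \<alpha> = d) f"
  have ss: "s = s0 + s1" unfolding s0_def s1_def by (rule filt_split)
  have ff: "f = f0 + f1" unfolding f0_def f1_def by (rule filt_split)
  have eq: "s * f = s0 * f0 + (s0 * f1 + s1 * f)"
  proof -
    have "s * f = s0 * f + s1 * f" using ss by (simp add: distrib_right)
    also have "s0 * f = s0 * f0 + s0 * f1" using ff by (simp add: distrib_left)
    finally show ?thesis by (simp add: add.assoc)
  qed
  have ks0: "ks s0 = {\<alpha>\<in>ks s. deg A \<alpha> = 0}" unfolding s0_def by (rule keys_filt)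
  have ks1: "ks s1 = {\<alpha>\<in>ks s. deg A \<alpha> \<noteq> 0}" unfolding s1_def by (rule keys_filt)
  have kf0: "ks f0 = {\<alpha>\<in>ks f. deg A \<alpha> = d}" unfolding f0_def by (rule keys_filt)
  have kf1: "ks f1 = {\<alpha>\<in>ks f. deg A \<alpha> \<noteq> d}" unfolding f1_def by (rule keys_filt)
  have "s0 \<noteq> 0" using a0 ks0 by auto
  moreover have "f0 \<noteq> 0" using b1 kf0 by auto
  ultimately have "s0 * f0 \<noteq> 0" by simp
  then obtain \<gamma> where g: "\<gamma> \<in> ks (s0 * f0)" by (metis ex_in_conv keys_eq_empty)
  then obtain a b where ab: "\<gamma> = a + b" "a \<in> ks s0" "b \<in> ks f0" using keys_mult[of s0 f0] by blast
  have dg: "deg A \<gamma> = d" using ab ks0 kf0 deg_add[of A a b] by simp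
  have notin: "\<gamma> \<notin> ks (s0 * f1 + s1 * f)"
  proof
    assume "\<gamma> \<in> ks (s0 * f1 + s1 * f)"
    then have "\<gamma> \<in> ks (s0 * f1) \<or> \<gamma> \<in> ks (s1 * f)" using keys_add[of "s0 * f1" "s1 * f"] by blast
    then show False
    proof
      assume "\<gamma> \<in> ks (s0 * f1)"
      then obtain a' b' where ab': "\<gamma> = a' + b'" "a' \<in> ks s0" "b' \<in> ks f1" using keys_mult[of s0 f1] by blast
      have "deg A \<gamma> = deg A a' + deg A b'" unfolding ab'(1) by (rule deg_add)
      moreover have "deg A a' = 0" using ab'(2) ks0 by simp
      moreover have "deg A b' \<noteq> d" "b' \<in> ks f" using ab'(3) kf1 by simp_all
      ultimately show False using dg d_le by fastforce
    next
      assume "\<gamma> \<in> ks (s1 * f)"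
      then obtain a' b' where ab': "\<gamma> = a' + b'" "a' \<in> ks s1" "b' \<in> ks f" using keys_mult[of s1 f] by blast
      have "deg A \<gamma> = deg A a' + deg A b'" unfolding ab'(1) by (rule deg_add)
      moreover have "deg A a' \<noteq> 0" using ab'(2) ks1 by simp
      moreover have "d \<le> deg A b'" using d_le ab'(3) by simp
      ultimately show False using dg by linarith
    qed
  qed
  have "lk (s * f) \<gamma> = lk (s0 * f0) \<gamma> + lk (s0 * f1 + s1 * f) \<gamma>" unfolding eq by (rule lookup_add)
  also have "lk (s0 * f1 + s1 * f) \<gamma> = 0" using notin by (simp add: in_keys_iff)
  finally have "lk (s * f) \<gamma> \<noteq> 0" using g by (simp add: in_keys_iff)
  then have "\<gamma> \<in> ks (s * f)" by (simp add: in_keys_iff)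
  then show ?thesis using dg dm by blast
qed


definition RV :: "nat \<Rightarrow> nat set \<Rightarrow> nat \<Rightarrow> nat \<Rightarrow> bool" where
  "RV n V = (\<lambda>a b. a \<in> V \<and> b \<in> V \<and> qedge n a b)"

lemma qedge_sym: "qedge n i j \<Longrightarrow> qedge n j i"
  unfolding qedge_def by auto

lemma rtranclp_RV_sym: "(RV n V)\<^sup>*\<^sup>* x y \<Longrightarrow> (RV n V)\<^sup>*\<^sup>* y x"
proof (induction rule: rtranclp.induct)
  case (rtrancl_refl a) then show ?case by simp
next
  case (rtrancl_into_rtrancl a b c)
  have "RV n V c b" using rtrancl_into_rtrancl(2) qedge_sym unfolding RV_def by blast
  then show ?case using rtrancl_into_rtrancl(3) by (rule converse_rtranclp_into_rtranclp)
qed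

lemma interval_conn_aux:
  assumes "{a..b} \<subseteq> V" "1 \<le> a" "b \<le> n"
  shows "a + k \<le> b \<Longrightarrow> (RV n V)\<^sup>*\<^sup>* a (a + k)"
proof (induction k)
  case 0 then show ?case by simp
next
  case (Suc k)
  then have "(RV n V)\<^sup>*\<^sup>* a (a + k)" by simp
  moreover have "RV n V (a + k) (a + Suc k)"
    unfolding RV_def qedge_def using Suc.prems assms by auto
  ultimately show ?case by (rule rtranclp.rtrancl_into_rtrancl)
qed

lemma interval_conn:
  assumes "{a..b} \<subseteq> V" "1 \<le> a" "b \<le> n" "u \<in> {a..b}" "v \<in> {a..b}"
  shows "(RV n V)\<^sup>*\<^sup>* u v"
proof -
  have u: "(RV n V)\<^sup>*\<^sup>* a u" using interval_conn_aux[OF assms(1-3), of "u - a"] assms(4) by simp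
  have v: "(RV n V)\<^sup>*\<^sup>* a v" using interval_conn_aux[OF assms(1-3), of "v - a"] assms(5) by simp
  show ?thesis using rtranclp_RV_sym[OF u] v by (rule rtranclp_trans)
qed

definition nx :: "nat \<Rightarrow> nat \<Rightarrow> nat" where "nx n k = (if k = n then 1 else k + 1)"

lemma qedge_nx: "qedge n a b \<longleftrightarrow> a \<in> {1..n} \<and> b \<in> {1..n} \<and> (b = nx n a \<or> a = nx n b)"
  unfolding qedge_def nx_def by auto

lemma compl_conn:
  assumes n: "n \<ge> 3" and i: "i \<in> {1..n}" and S: "S = {1..n} - {i, nx n i}"
  shows "\<forall>u\<in>S. \<forall>v\<in>S. (RV n S)\<^sup>*\<^sup>* u v"
proof (cases "i = n")
  case True
  then have "S = {2..n-1}" using S n by (auto simp: nx_def)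
  then show ?thesis using interval_conn[of 2 "n-1" S n] by auto
next
  case False
  then have Si: "S = {1..n} - {i, i+1}" using S by (simp add: nx_def)
  show ?thesis
  proof (cases "i = 1")
    case True
    then have "S = {3..n}" using Si by auto
    then show ?thesis using interval_conn[of 3 n S n] by auto
  next
    case i1: False
    show ?thesis
    proof (cases "i = n - 1")
      case True
      then have "S = {1..n-2}" using Si n by auto
      then show ?thesis using interval_conn[of 1 "n-2" S n] by auto
    next
      case i2: False
      have sub1: "{1..i-1} \<subseteq> S" using Si i by auto
      have sub2: "{i+2..n} \<subseteq> S" using Si i by auto
      have e: "RV n S n 1" unfolding RV_def qedge_def using Si i i1 i2 False n by auto
      have all1: "(RV n S)\<^sup>*\<^sup>* u 1" if u: "u \<in> S" for u
      proof (cases "u < i")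
        case True
        then show ?thesis using interval_conn[OF sub1, of n u 1] u i i1 Si by auto
      next
        case False
        then have "u \<in> {i+2..n}" using u Si by auto
        then have "(RV n S)\<^sup>*\<^sup>* u n" using interval_conn[OF sub2, of n u n] i i2 False n by auto
        then show ?thesis using e by (rule rtranclp.rtrancl_into_rtrancl)
      qed
      show ?thesis
      proof (intro ballI)
        fix u v assume "u \<in> S" "v \<in> S"
        then show "(RV n S)\<^sup>*\<^sup>* u v" using all1[of u] rtranclp_RV_sym[OF all1[of v]] by (rule_tac rtranclp_trans) auto
      qed
    qed
  qed
qed


lemma edges_img:
  assumes "V \<subseteq> {1..n}"
  shows "{{x, y} | x y. x \<in> V \<and> y \<in> V \<and> qedge n x y} = (\<lambda>k. {k, nx n k}) ` {k\<in>V. nx n k \<in> V}"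
proof
  show "{{x, y} | x y. x \<in> V \<and> y \<in> V \<and> qedge n x y} \<subseteq> (\<lambda>k. {k, nx n k}) ` {k\<in>V. nx n k \<in> V}"
  proof
    fix e assume "e \<in> {{x, y} | x y. x \<in> V \<and> y \<in> V \<and> qedge n x y}"
    then obtain x y where xy: "e = {x, y}" "x \<in> V" "y \<in> V" "qedge n x y" by blast
    then have "y = nx n x \<or> x = nx n y" unfolding qedge_nx by blast
    then show "e \<in> (\<lambda>k. {k, nx n k}) ` {k\<in>V. nx n k \<in> V}"
    proof
      assume "y = nx n x" then show ?thesis using xy by blast
    next
      assume "x = nx n y" then have "e = {y, nx n y}" using xy(1) by auto
      then show ?thesis using xy \<open>x = nx n y\<close> by blast
    qed
  qed
  show "(\<lambda>k. {k, nx n k}) ` {k\<in>V. nx n k \<in> V} \<subseteq> {{x, y} | x y. x \<in> V \<and> y \<in> V \<and> qedge n x y}"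
  proof
    fix e assume "e \<in> (\<lambda>k. {k, nx n k}) ` {k\<in>V. nx n k \<in> V}"
    then obtain k where k: "e = {k, nx n k}" "k \<in> V" "nx n k \<in> V" by blast
    have "qedge n k (nx n k)" unfolding qedge_nx using k assms by blast
    then show "e \<in> {{x, y} | x y. x \<in> V \<and> y \<in> V \<and> qedge n x y}" using k by blast
  qed
qed

lemma inj_h: "n \<ge> 3 \<Longrightarrow> inj_on (\<lambda>k. {k, nx n k}) {1..n}"
  unfolding inj_on_def doubleton_eq_iff nx_def by auto

lemma K_eq:
  assumes n: "n \<ge> 3" and i: "i \<in> {1..n}"
  shows "{k \<in> {1..n} - {i, nx n i}. nx n k \<in> {1..n} - {i, nx n i}} = {1..n} - {i, nx n i, if i = 1 then n else i - 1}"
  using n i unfolding nx_def by auto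

lemma card3: 
  assumes n: "n \<ge> 3" and i: "i \<in> {1..n}"
  shows "card {i, nx n i, if i = 1 then n else i - 1} = 3"
  using n i unfolding nx_def by auto

lemma core_subtree:
  assumes n: "n \<ge> 3" and i: "i \<in> {1..n}"
  shows "{1..n} - {i, nx n i} \<in> subtrees (n - 2) n"
proof -
  define S where "S = {1..n} - {i, nx n i}"
  have sub2: "{i, nx n i} \<subseteq> {1..n}" using i n unfolding nx_def by auto
  have c2: "card {i, nx n i} = 2" using i n unfolding nx_def by auto
  have cS: "card S = n - 2" unfolding S_def using card_Diff_subset[OF _ sub2] c2 by simp
  have SV: "S \<subseteq> {1..n}" unfolding S_def by blast
  have ne: "S \<noteq> {}" using cS n by auto
  have conn: "\<forall>u\<in>S. \<forall>v\<in>S. (\<lambda>a b. a \<in> S \<and> b \<in> S \<and> qedge n a b)\<^sup>*\<^sup>* u v"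
    using compl_conn[OF n i S_def] unfolding RV_def .
  define p where "p = (if i = 1 then n else i - 1)"
  have sub3: "{i, nx n i, p} \<subseteq> {1..n}" using i n unfolding nx_def p_def by auto
  have c3: "card {i, nx n i, p} = 3" using card3[OF n i] unfolding p_def .
  have K: "{k\<in>S. nx n k \<in> S} = {1..n} - {i, nx n i, p}" unfolding S_def p_def by (rule K_eq[OF n i])
  have cK: "card {k\<in>S. nx n k \<in> S} = n - 3" unfolding K using card_Diff_subset[OF _ sub3] c3 by simp
  have KV: "{k\<in>S. nx n k \<in> S} \<subseteq> {1..n}" using SV by blast
  have "card {{x, y} | x y. x \<in> S \<and> y \<in> S \<and> qedge n x y} = card {k\<in>S. nx n k \<in> S}"
    unfolding edges_img[OF SV] by (rule card_image[OF inj_on_subset[OF inj_h[OF n] KV]])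
  then have "card {{x, y} | x y. x \<in> S \<and> y \<in> S \<and> qedge n x y} = card S - 1" using cK cS by simp
  then have "induces_tree n S" unfolding induces_tree_def using SV ne conn by blast
  then show ?thesis unfolding subtrees_def S_def[symmetric] using cS by blast
qed

lemma compl_subtree:
  assumes n: "n \<ge> 3" and q: "qedge n i j"
  shows "{1..n} - {i, j} \<in> subtrees (n - 2) n"
proof -
  have ij: "i \<in> {1..n}" "j \<in> {1..n}" and o: "j = nx n i \<or> i = nx n j" using q unfolding qedge_nx by auto
  from o show ?thesis
  proof
    assume "j = nx n i" then show ?thesis using core_subtree[OF n ij(1)] by simp
  next
    assume "i = nx n j" then have "{i, j} = {j, nx n j}" by auto
    then show ?thesis using core_subtree[OF n ij(2)] by simp
  qed
qed

lemma subtree_compl: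
  assumes n: "n \<ge> 3" and S: "S \<in> subtrees (n - 2) n"
  shows "\<exists>i j. qedge n i j \<and> {1..n} - S = {i, j}"
proof -
  have SV: "S \<subseteq> {1..n}" and cS: "card S = n - 2"
    and conn: "\<forall>u\<in>S. \<forall>v\<in>S. (RV n S)\<^sup>*\<^sup>* u v"
    using S unfolding subtrees_def induces_tree_def RV_def by auto
  have "card ({1..n} - S) = 2" using card_Diff_subset[OF _ SV] cS n by (simp add: finite_subset[OF SV])
  then obtain x y where xy: "{1..n} - S = {x, y}" "x \<noteq> y" by (auto simp: card_2_iff)
  obtain i j where ij: "{1..n} - S = {i, j}" "i < j"
  proof (cases "x < y")
    case True then show ?thesis using that xy by blast
  next
    case False then have "y < x" using xy(2) by simp
    then show ?thesis using that[of y x] xy by (simp add: insert_commute)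
  qed
  have iV: "i \<in> {1..n}" "j \<in> {1..n}" "i \<notin> S" "j \<notin> S" using ij(1) by auto
  show ?thesis
  proof (rule ccontr)
    assume "\<not> ?thesis"
    then have nq: "\<not> qedge n i j" using ij(1) by blast
    then have gap: "i + 1 < j" "\<not> (i = 1 \<and> j = n)" using ij(2) iV unfolding qedge_def by auto
    define u where "u = i + 1"
    have "u \<in> {1..n}" "u \<noteq> i" "u \<noteq> j" using gap iV unfolding u_def by auto
    then have uS: "u \<in> S" using ij(1) by blast
    define v where "v = (if 1 < i then 1 else n)"
    have "v \<in> {1..n}" "v \<noteq> i" "v \<noteq> j" using gap iV ij(2) n unfolding v_def by auto
    then have vS: "v \<in> S" using ij(1) by blast
    have inv: "(RV n S)\<^sup>*\<^sup>* u w \<Longrightarrow> i < w \<and> w < j" for w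
    proof (induction rule: rtranclp_induct)
      case base then show ?case using gap unfolding u_def by simp
    next
      case (step y z)
      have "z \<in> S" "qedge n y z" using step(2) unfolding RV_def by auto
      then have "z \<noteq> i" "z \<noteq> j" "qedge n y z" using iV by auto
      then show ?case using step(3) iV unfolding qedge_def by auto
    qed
    have "i < v \<and> v < j" using inv conn uS vS by blast
    then show False using iV unfolding v_def by (auto split: if_splits)
  qed
qed


definition facet :: "nat \<Rightarrow> nat set \<Rightarrow> bool" where
  "facet n F \<longleftrightarrow> (\<exists>c i j. qedge n i j \<and> c \<in> {0, n+1} \<and> F = {c, i, j})"

lemma face_iff_facet: "Bn_face n T \<longleftrightarrow> (\<exists>F. facet n F \<and> T \<subseteq> F)"
  unfolding Bn_face_def facet_def by blast

lemma facet_props: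
  assumes n: "n \<ge> 3" and F: "facet n F"
  shows "F \<subseteq> {0..n+1}" "card F = 3" "finite F"
proof -
  obtain c i j where cij: "qedge n i j" "c \<in> {0, n+1}" "F = {c, i, j}" using F unfolding facet_def by blast
  have ij: "i \<in> {1..n}" "j \<in> {1..n}" "i \<noteq> j" using cij(1) n unfolding qedge_def by auto
  show "F \<subseteq> {0..n+1}" using cij ij by auto
  show "card F = 3" using cij ij by auto
  show "finite F" using cij by simp
qed

lemma colon_face:
  assumes n: "n \<ge> 3" and F: "facet n F"
  shows "Bn_face n (T \<union> F) \<longleftrightarrow> T \<subseteq> F"
proof
  assume "Bn_face n (T \<union> F)"
  then obtain G where G: "facet n G" "T \<union> F \<subseteq> G" using face_iff_facet by blast
  have "F \<subseteq> G" using G by blast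
  moreover have "card F = card G" using facet_props[OF n F] facet_props[OF n G(1)] by simp
  ultimately have "F = G" using card_subset_eq facet_props(3)[OF n G(1)] by blast
  then show "T \<subseteq> F" using G by blast
next
  assume "T \<subseteq> F"
  then have "T \<union> F = F" by blast
  then show "Bn_face n (T \<union> F)" using face_iff_facet F by blast
qed

definition oth :: "nat \<Rightarrow> nat \<Rightarrow> nat" where "oth n a = (if a = 0 then n + 1 else 0)"

lemma facet_compl:
  assumes n: "n \<ge> 3" and q: "qedge n i j" and c: "c \<in> {0, n+1}"
  shows "{0..n+1} - {c, i, j} = insert (oth n c) ({1..n} - {i, j})"
  using q c n unfolding qedge_def oth_def by auto

lemma subtree_facet:
  assumes n: "n \<ge> 3" and S: "S \<subseteq> {1..n}" "{1..n} - S = {i, j}" and a: "a \<in> {0, n+1}"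
  shows "insert a S = {0..n+1} - {oth n a, i, j}"
proof -
  have ij: "i \<in> {1..n}" "j \<in> {1..n}" "i \<notin> S" "j \<notin> S" using S(2) by auto
  show ?thesis
  proof
    show "insert a S \<subseteq> {0..n+1} - {oth n a, i, j}" using a S(1) ij n unfolding oth_def by auto
    show "{0..n+1} - {oth n a, i, j} \<subseteq> insert a S"
    proof
      fix x assume x: "x \<in> {0..n+1} - {oth n a, i, j}"
      show "x \<in> insert a S"
      proof (cases "x \<in> {1..n}")
        case True then show ?thesis using x S(2) by blast
      next
        case False then have "x = 0 \<or> x = n + 1" using x by auto
        then show ?thesis using x a unfolding oth_def by auto
      qed
    qed
  qed
qed

lemma RHS_char:
  assumes n: "n \<ge> 3"
  shows "(\<Inter>S \<in> subtrees (n - 2) n. X (insert 0 S) \<inter> X (insert (n+1) S))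
       = {f. \<forall>F. facet n F \<longrightarrow> f \<in> X ({0..n+1} - F)}"
proof
  show "(\<Inter>S \<in> subtrees (n - 2) n. X (insert 0 S) \<inter> X (insert (n+1) S)) \<subseteq> {f. \<forall>F. facet n F \<longrightarrow> f \<in> X ({0..n+1} - F)}"
  proof (clarify)
    fix f F assume f: "f \<in> (\<Inter>S \<in> subtrees (n - 2) n. X (insert 0 S) \<inter> X (insert (n+1) S))" and F: "facet n F"
    obtain c i j where cij: "qedge n i j" "c \<in> {0, n+1}" "F = {c, i, j}" using F unfolding facet_def by blast
    have S: "{1..n} - {i, j} \<in> subtrees (n - 2) n" by (rule compl_subtree[OF n cij(1)])
    have e: "{0..n+1} - F = insert (oth n c) ({1..n} - {i, j})" unfolding cij(3) by (rule facet_compl[OF n cij(1,2)])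
    have "oth n c = 0 \<or> oth n c = n + 1" unfolding oth_def by auto
    then show "f \<in> X ({0..n+1} - F)" using f S unfolding e by auto
  qed
  show "{f. \<forall>F. facet n F \<longrightarrow> f \<in> X ({0..n+1} - F)} \<subseteq> (\<Inter>S \<in> subtrees (n - 2) n. X (insert 0 S) \<inter> X (insert (n+1) S))"
  proof (clarify)
    fix f S assume f: "\<forall>F. facet n F \<longrightarrow> f \<in> X ({0..n+1} - F)" and S: "S \<in> subtrees (n - 2) n"
    obtain i j where ij: "qedge n i j" "{1..n} - S = {i, j}" using subtree_compl[OF n S] by blast
    have SV: "S \<subseteq> {1..n}" using S unfolding subtrees_def induces_tree_def by blast
    have "f \<in> X (insert a S)" if a: "a \<in> {0, n+1}" for a
    proof -
      have "oth n a \<in> {0, n+1}" unfolding oth_def by auto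
      then have "facet n {oth n a, i, j}" unfolding facet_def using ij(1) by blast
      then have "f \<in> X ({0..n+1} - {oth n a, i, j})" using f by blast
      then show ?thesis using subtree_facet[OF n SV ij(2) a] by simp
    qed
    then show "f \<in> X (insert 0 S) \<inter> X (insert (n+1) S)" by blast
  qed
qed

lemma exists_facet: "n \<ge> 3 \<Longrightarrow> facet n {0, 1, 2}"
  unfolding facet_def qedge_def by (rule exI[of _ 0], rule exI[of _ 1], rule exI[of _ 2]) auto

lemma I_face_MI: "a \<in> {0, n+1} \<Longrightarrow> S \<subseteq> {1..n} \<Longrightarrow> I_face n a S = (MI n (Dg (insert a S) 1) :: 'k::comm_ring_1 mpoly set)"
proof -
  assume a: "a \<in> {0, n+1}" and S: "S \<subseteq> {1..n}"
  have "insert a S \<subseteq> {0..n+1}" using a S by auto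
  then show ?thesis unfolding I_face_def image_insert[symmetric] by (rule Var_MI)
qed


lemma MI_iff: "f \<in> MI n U \<longleftrightarrow> f \<in> Rn n \<and> (\<forall>\<alpha>\<in>ks f. \<alpha> \<in> U)"
  unfolding MI_def by blast

lemma facet_A_finite: "finite ({0..n+1} - (F::nat set))" by simp

lemma Dg1_iff: "\<alpha> \<in> Dg A 1 \<longleftrightarrow> ks \<alpha> \<inter> A \<noteq> {}" if "finite A"
  using deg_pos_iff[OF that, of \<alpha>] unfolding Dg_def by auto

lemma NF_iff:
  assumes n: "n \<ge> 3" and ka: "ks \<alpha> \<subseteq> {0..n+1}"
  shows "\<alpha> \<in> NF n \<longleftrightarrow> (\<forall>F. facet n F \<longrightarrow> \<alpha> \<in> Dg ({0..n+1} - F) 1)"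
proof -
  have "\<alpha> \<in> NF n \<longleftrightarrow> \<not> Bn_face n (ks \<alpha>)" unfolding NF_def using ka by (simp add: Int_absorb2)
  also have "\<dots> \<longleftrightarrow> (\<forall>F. facet n F \<longrightarrow> \<not> ks \<alpha> \<subseteq> F)" unfolding face_iff_facet by blast
  also have "\<dots> \<longleftrightarrow> (\<forall>F. facet n F \<longrightarrow> ks \<alpha> \<inter> ({0..n+1} - F) \<noteq> {})" using ka by blast
  also have "\<dots> \<longleftrightarrow> (\<forall>F. facet n F \<longrightarrow> \<alpha> \<in> Dg ({0..n+1} - F) 1)"
    using Dg1_iff[OF facet_A_finite] by blast
  finally show ?thesis .
qed

lemma NF_sub:
  assumes n: "n \<ge> 3" and F: "facet n F"
  shows "NF n \<subseteq> Dg ({0..n+1} - F) 1"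
proof
  fix \<alpha> assume a: "\<alpha> \<in> NF n"
  have "ks \<alpha> \<inter> ({0..n+1} - F) \<noteq> {}"
  proof
    assume "ks \<alpha> \<inter> ({0..n+1} - F) = {}"
    then have "ks \<alpha> \<inter> {0..n+1} \<subseteq> F" by blast
    then have "Bn_face n (ks \<alpha> \<inter> {0..n+1})" using F face_iff_facet by blast
    then show False using a unfolding NF_def by blast
  qed
  then show "\<alpha> \<in> Dg ({0..n+1} - F) 1" using Dg1_iff[OF facet_A_finite] by blast
qed

lemma part1:
  assumes n: "n \<ge> 3"
  shows "(MI n (NF n) :: 'k::comm_ring_1 mpoly set) = {f. \<forall>F. facet n F \<longrightarrow> f \<in> MI n (Dg ({0..n+1} - F) 1)}"
proof
  show "(MI n (NF n) :: 'k mpoly set) \<subseteq> {f. \<forall>F. facet n F \<longrightarrow> f \<in> MI n (Dg ({0..n+1} - F) 1)}"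
    using MI_mono[OF NF_sub[OF n]] by blast
  show "{f. \<forall>F. facet n F \<longrightarrow> f \<in> MI n (Dg ({0..n+1} - F) 1)} \<subseteq> (MI n (NF n) :: 'k mpoly set)"
  proof clarify
    fix f :: "'k mpoly" assume f: "\<forall>F. facet n F \<longrightarrow> f \<in> MI n (Dg ({0..n+1} - F) 1)"
    have fR: "f \<in> Rn n" using f exists_facet[OF n] unfolding MI_def by blast
    have "\<forall>\<alpha>\<in>ks f. \<alpha> \<in> NF n"
    proof
      fix \<alpha> assume a: "\<alpha> \<in> ks f"
      have ka: "ks \<alpha> \<subseteq> {0..n+1}" using fR a unfolding Rn_iff by blast
      show "\<alpha> \<in> NF n" unfolding NF_iff[OF n ka] using f a unfolding MI_def by blast
    qed
    then show "f \<in> MI n (NF n)" using fR unfolding MI_def by blast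
  qed
qed

lemma primary_MI:
  fixes s f :: "'k::field mpoly"
  assumes finA: "finite A" and sR: "s \<in> Rn n" and sP: "s \<notin> MI n (Dg A 1)" and fR: "f \<in> Rn n"
    and sf: "s * f \<in> MI n (Dg A m)"
  shows "f \<in> MI n (Dg A m)"
proof (rule ccontr)
  assume "f \<notin> MI n (Dg A m)"
  then have "\<not> (\<forall>\<alpha>\<in>ks f. m \<le> deg A \<alpha>)" using fR unfolding MI_def Dg_def by blast
  then obtain \<beta>0 where b0': "\<beta>0 \<in> ks f" "\<not> m \<le> deg A \<beta>0" by blast
  then have b0: "\<beta>0 \<in> ks f" "deg A \<beta>0 < m" by auto
  have "\<not> (\<forall>\<alpha>\<in>ks s. 1 \<le> deg A \<alpha>)" using sR sP unfolding MI_def Dg_def by blast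
  then obtain \<alpha>0 where a0': "\<alpha>0 \<in> ks s" "\<not> 1 \<le> deg A \<alpha>0" by blast
  then have a0: "\<alpha>0 \<in> ks s" "deg A \<alpha>0 < 1" by auto
  then have "deg A \<alpha>0 = 0" by simp
  then obtain \<gamma> where "\<gamma> \<in> ks (s * f)" "deg A \<gamma> < m" using primary[OF finA a0(1) _ b0] by blast
  then show False using sf unfolding MI_def Dg_def by force
qed

lemma keys_ind_facet: "n \<ge> 3 \<Longrightarrow> facet n F \<Longrightarrow> ks (ind F) = F"
  using keys_ind facet_props(3) by blast

lemma P_Ass:
  assumes n: "n \<ge> 3" and F: "facet n F"
  shows "(MI n (Dg ({0..n+1} - F) 1) :: 'k::field mpoly set) \<in> Ass (Rn n) (MI n (NF n))"
proof -
  define A where "A = {0..n+1} - F"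
  have finA: "finite A" unfolding A_def by simp
  let ?P = "MI n (Dg A 1) :: 'k mpoly set"
  have id: "is_ideal (Rn n) ?P" by (rule MI_ideal[OF upc_Dg])
  have one: "(1 :: 'k mpoly) \<notin> ?P"
  proof
    assume "(1 :: 'k mpoly) \<in> ?P"
    then have "(0::mon) \<in> Dg A 1" unfolding MI_def by simp
    then show False unfolding Dg_def deg_def by simp
  qed
  have ne: "?P \<noteq> Rn n" using one Rn_one by blast
  have pr: "\<forall>a\<in>Rn n. \<forall>b\<in>Rn n. a * b \<in> ?P \<longrightarrow> a \<in> ?P \<or> b \<in> ?P"
  proof (intro ballI impI)
    fix a b :: "'k mpoly" assume aR: "a \<in> Rn n" and bR: "b \<in> Rn n" and ab: "a * b \<in> ?P"
    show "a \<in> ?P \<or> b \<in> ?P"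
    proof (rule ccontr)
      assume "\<not> (a \<in> ?P \<or> b \<in> ?P)"
      then have "a \<notin> ?P" "b \<notin> ?P" by auto
      then have "b \<in> ?P" using primary_MI[OF finA aR _ bR ab] by blast
      then show False using \<open>b \<notin> ?P\<close> by blast
    qed
  qed
  have prime: "prime_ideal (Rn n) ?P" unfolding prime_ideal_def using id ne pr by blast
  define g where "g = (sg (ind F) 1 :: 'k mpoly)"
  have kF: "ks (ind F) = F" by (rule keys_ind_facet[OF n F])
  have FV: "F \<subseteq> {0..n+1}" by (rule facet_props(1)[OF n F])
  have gR: "g \<in> Rn n" unfolding g_def by (rule Rn_single) (simp only: kF FV)
  have col: "?P = {h \<in> Rn n. h * g \<in> MI n (NF n)}"
  proof (intro set_eqI iffI)
    fix h assume h: "h \<in> ?P"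
    then have hR: "h \<in> Rn n" unfolding MI_def by blast
    have "\<forall>x\<in>ks (h * g). x \<in> NF n"
    proof
      fix x assume "x \<in> ks (h * g)"
      then obtain \<alpha> where al: "x = \<alpha> + ind F" "\<alpha> \<in> ks h" unfolding g_def keys_shift by blast
      have ka: "ks \<alpha> \<subseteq> {0..n+1}" using hR al(2) unfolding Rn_iff by blast
      have "\<alpha> \<in> Dg A 1" using h al(2) unfolding MI_def by blast
      then have "ks \<alpha> \<inter> A \<noteq> {}" using Dg1_iff[OF finA] by blast
      then have nsub: "\<not> ks \<alpha> \<subseteq> F" unfolding A_def using ka by blast
      have kx: "ks x \<inter> {0..n+1} = ks \<alpha> \<union> F" unfolding al(1) keys_add_nat kF using ka FV by blast
      show "x \<in> NF n" unfolding NF_def mem_Collect_eq kx colon_face[OF n F] using nsub .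
    qed
    then show "h \<in> {h \<in> Rn n. h * g \<in> MI n (NF n)}" using hR gR Rn_mult[OF hR gR] unfolding MI_def by blast
  next
    fix h assume h: "h \<in> {h \<in> Rn n. h * g \<in> MI n (NF n)}"
    then have hR: "h \<in> Rn n" and hg: "h * g \<in> MI n (NF n)" by auto
    have "\<forall>\<alpha>\<in>ks h. \<alpha> \<in> Dg A 1"
    proof
      fix \<alpha> assume al: "\<alpha> \<in> ks h"
      have ka: "ks \<alpha> \<subseteq> {0..n+1}" using hR al unfolding Rn_iff by blast
      have "\<alpha> + ind F \<in> ks (h * g)" unfolding g_def keys_shift using al by blast
      then have "\<alpha> + ind F \<in> NF n" using hg unfolding MI_def by blast
      moreover have kx: "ks (\<alpha> + ind F) \<inter> {0..n+1} = ks \<alpha> \<union> F" unfolding keys_add_nat kF using ka FV by blast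
      ultimately have "\<not> ks \<alpha> \<subseteq> F" unfolding NF_def mem_Collect_eq kx colon_face[OF n F] by blast
      then have "ks \<alpha> \<inter> A \<noteq> {}" unfolding A_def using ka by blast
      then show "\<alpha> \<in> Dg A 1" using Dg1_iff[OF finA] by blast
    qed
    then show "h \<in> ?P" using hR unfolding MI_def by blast
  qed
  show ?thesis unfolding Ass_def A_def[symmetric] using prime gR col by blast
qed

fun mulp :: "nat \<Rightarrow> mon \<Rightarrow> mon" where
  "mulp 0 \<gamma> = 0"
| "mulp (Suc m) \<gamma> = \<gamma> + mulp m \<gamma>"

lemma keys_mulp: "ks (mulp m \<gamma>) \<subseteq> ks \<gamma>"
proof (induction m)
  case 0 then show ?case by simp
next
  case (Suc m) then show ?case using keys_add_nat[of \<gamma> "mulp m \<gamma>"] by simp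
qed

lemma mult_in_pw:
  assumes n: "n \<ge> 3" and F: "facet n F"
  shows "\<alpha> \<in> Dg ({0..n+1} - F) m \<Longrightarrow> \<alpha> + mulp m (ind F) \<in> pw (NF n) m"
proof (induction m arbitrary: \<alpha>)
  case 0 then show ?case by simp
next
  case (Suc m)
  define A where "A = {0..n+1} - F"
  have finA: "finite A" unfolding A_def by simp
  have kF: "ks (ind F) = F" by (rule keys_ind_facet[OF n F])
  have FV: "F \<subseteq> {0..n+1}" by (rule facet_props(1)[OF n F])
  have "1 \<le> deg A \<alpha>" using Suc.prems unfolding Dg_def A_def by simp
  then obtain i where i: "i \<in> A" "lk \<alpha> i \<noteq> 0" using exists_var[OF finA] by blast
  define \<alpha>' where "\<alpha>' = \<alpha> - sg i 1"
  have e: "\<alpha> = sg i 1 + \<alpha>'" unfolding \<alpha>'_def by (rule unit_split[OF i(2)])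
  have "deg A \<alpha> = deg A (sg i 1) + deg A \<alpha>'" unfolding \<alpha>'_def by (rule deg_split[OF i(2)])
  then have "deg A \<alpha> = 1 + deg A \<alpha>'" using deg_single[OF finA, of i] i(1) by simp
  then have "\<alpha>' \<in> Dg A m" using Suc.prems unfolding Dg_def A_def by simp
  then have ih: "\<alpha>' + mulp m (ind F) \<in> pw (NF n) m" using Suc.IH unfolding A_def by blast
  have kx: "ks (sg i 1 + ind F) \<inter> {0..n+1} = {i} \<union> F" unfolding keys_add_nat kF using i(1) FV unfolding A_def by auto
  have "\<not> {i} \<subseteq> F" using i(1) unfolding A_def by blast
  then have nf: "\<not> Bn_face n ({i} \<union> F)" using colon_face[OF n F, of "{i}"] by blast
  have "sg i 1 + ind F \<in> NF n" unfolding NF_def mem_Collect_eq kx by (rule nf)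
  then have "(sg i 1 + ind F) + (\<alpha>' + mulp m (ind F)) \<in> pw (NF n) (Suc m)" using ih unfolding pw.simps plusset_def by blast
  moreover have "\<alpha> + mulp (Suc m) (ind F) = (sg i 1 + ind F) + (\<alpha>' + mulp m (ind F))"
    unfolding e mulp.simps by (simp only: add.assoc add.commute add.left_commute)
  ultimately show ?case by (simp only:)
qed


lemma part2:
  assumes n: "n \<ge> 3"
  shows "symb_pow (Rn n) (MI n (NF n) :: 'k::field mpoly set) m
       = {f. \<forall>F. facet n F \<longrightarrow> f \<in> MI n (Dg ({0..n+1} - F) m)}"
proof
  have Ipow: "ideal_pow (Rn n) (MI n (NF n) :: 'k mpoly set) m = MI n (pw (NF n) m)"
    by (rule ideal_pow_MI[OF upc_NF])
  show "symb_pow (Rn n) (MI n (NF n) :: 'k mpoly set) m \<subseteq> {f. \<forall>F. facet n F \<longrightarrow> f \<in> MI n (Dg ({0..n+1} - F) m)}"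
  proof (clarify)
    fix f :: "'k mpoly" and F assume f: "f \<in> symb_pow (Rn n) (MI n (NF n)) m" and F: "facet n F"
    define A where "A = {0..n+1} - F"
    have finA: "finite A" unfolding A_def by simp
    have fR: "f \<in> Rn n" using f unfolding symb_pow_def by blast
    have PA: "(MI n (Dg A 1) :: 'k mpoly set) \<in> Ass (Rn n) (MI n (NF n))" unfolding A_def by (rule P_Ass[OF n F])
    then obtain s where s: "s \<in> Rn n" "s \<notin> MI n (Dg A 1)" "s * f \<in> ideal_pow (Rn n) (MI n (NF n)) m"
      using f unfolding symb_pow_def by blast
    have "pw (NF n) m \<subseteq> pw (Dg A 1) m" unfolding A_def by (rule pw_mono[OF NF_sub[OF n F]])
    then have "pw (NF n) m \<subseteq> Dg A m" using pw_Dg[OF finA, of m] by simp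
    then have "s * f \<in> MI n (Dg A m)" using s(3) MI_mono unfolding Ipow by blast
    then show "f \<in> MI n (Dg ({0..n+1} - F) m)" using primary_MI[OF finA s(1,2) fR] unfolding A_def by blast
  qed
  show "{f. \<forall>F. facet n F \<longrightarrow> f \<in> MI n (Dg ({0..n+1} - F) m)} \<subseteq> symb_pow (Rn n) (MI n (NF n) :: 'k mpoly set) m"
  proof (clarify)
    fix f :: "'k mpoly" assume f: "\<forall>F. facet n F \<longrightarrow> f \<in> MI n (Dg ({0..n+1} - F) m)"
    have fR: "f \<in> Rn n" using f exists_facet[OF n] unfolding MI_def by blast
    have "\<exists>s\<in>Rn n - P. s * f \<in> ideal_pow (Rn n) (MI n (NF n)) m" if P: "P \<in> Ass (Rn n) (MI n (NF n))" for P
    proof -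
      obtain g where g: "g \<in> Rn n" "P = {h \<in> Rn n. h * g \<in> MI n (NF n)}" and pr: "prime_ideal (Rn n) P"
        using P unfolding Ass_def by blast
      have idP: "is_ideal (Rn n) P" and neP: "P \<noteq> Rn n" using pr unfolding prime_ideal_def by blast+
      have gI: "g \<notin> MI n (NF n)"
      proof
        assume "g \<in> MI n (NF n)"
        then have one: "1 \<in> P" using g Rn_one by simp
        have "Rn n \<subseteq> P"
        proof
          fix r :: "'k mpoly" assume "r \<in> Rn n"
          then have "r * 1 \<in> P" using is_idealD(4)[OF idP _ one] by blast
          then show "r \<in> P" by simp
        qed
        then show False using neP is_idealD(1)[OF idP] by blast
      qed
      then obtain \<beta> where b: "\<beta> \<in> ks g" "\<beta> \<notin> NF n" using g(1) unfolding MI_def by blast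
      have kb: "ks \<beta> \<subseteq> {0..n+1}" using g(1) b(1) unfolding Rn_iff by blast
      have "Bn_face n (ks \<beta>)" using b(2) kb unfolding NF_def by (simp add: Int_absorb2)
      then obtain F where F: "facet n F" "ks \<beta> \<subseteq> F" using face_iff_facet by blast
      have kF: "ks (ind F) = F" by (rule keys_ind_facet[OF n F(1)])
      have FV: "F \<subseteq> {0..n+1}" by (rule facet_props(1)[OF n F(1)])
      define \<gamma> where "\<gamma> = mulp m (ind F)"
      have kg: "ks \<gamma> \<subseteq> F" unfolding \<gamma>_def using keys_mulp[of m "ind F"] kF by simp
      define s where "s = (sg \<gamma> 1 :: 'k mpoly)"
      have sR: "s \<in> Rn n" unfolding s_def by (rule Rn_single) (use kg FV in blast)
      have sP: "s \<notin> P"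
      proof
        assume "s \<in> P"
        then have sg_in: "g * s \<in> MI n (NF n)" using g(2) by (simp add: mult.commute)
        have "\<beta> + \<gamma> \<in> ks (g * s)" unfolding s_def keys_shift using b(1) by blast
        then have "\<beta> + \<gamma> \<in> NF n" using sg_in unfolding MI_def by blast
        moreover have "ks (\<beta> + \<gamma>) \<inter> {0..n+1} \<subseteq> F" unfolding keys_add_nat using F(2) kg by blast
        then have "Bn_face n (ks (\<beta> + \<gamma>) \<inter> {0..n+1})" using face_iff_facet F(1) by blast
        ultimately show False unfolding NF_def by blast
      qed
      have fF: "f \<in> MI n (Dg ({0..n+1} - F) m)" using f F(1) by blast
      have "\<forall>x\<in>ks (f * s). x \<in> pw (NF n) m"
      proof
        fix x assume "x \<in> ks (f * s)"
        then obtain \<alpha> where al: "x = \<alpha> + \<gamma>" "\<alpha> \<in> ks f" unfolding s_def keys_shift by blast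
        have "\<alpha> \<in> Dg ({0..n+1} - F) m" using fF al(2) unfolding MI_def by blast
        then have "\<alpha> + \<gamma> \<in> pw (NF n) m" unfolding \<gamma>_def by (rule mult_in_pw[OF n F(1)])
        then show "x \<in> pw (NF n) m" using al(1) by simp
      qed
      then have "f * s \<in> MI n (pw (NF n) m)" using Rn_mult[OF fR sR] unfolding MI_def by blast
      then have "s * f \<in> ideal_pow (Rn n) (MI n (NF n)) m" unfolding Ipow by (simp add: mult.commute)
      then show ?thesis using sR sP by blast
    qed
    then show "f \<in> symb_pow (Rn n) (MI n (NF n)) m" unfolding symb_pow_def using fR by blast
  qed
qed

theorem proposition3p2:
  fixes n :: nat
  assumes "n \<ge> 3"
  shows "(SR_ideal_Bn n :: 'k::field mpoly set)
           = (\<Inter>S \<in> subtrees (n - 2) n. I_face n 0 S \<inter> I_face n (n + 1) S)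
     \<and> (\<forall>m::nat. m \<ge> 1 \<longrightarrow>
           symb_pow (Rn n) (SR_ideal_Bn n :: 'k::field mpoly set) m
           = (\<Inter>S \<in> subtrees (n - 2) n.
                ideal_pow (Rn n) (I_face n 0 S) m \<inter> ideal_pow (Rn n) (I_face n (n + 1) S) m))"
proof -
  have n: "n \<ge> 3" using assms .
  have SV: "S \<subseteq> {1..n}" if "S \<in> subtrees (n - 2) n" for S
    using that unfolding subtrees_def induces_tree_def by blast
  have c1: "(\<Inter>S \<in> subtrees (n - 2) n. I_face n 0 S \<inter> I_face n (n + 1) S)
      = (\<Inter>S \<in> subtrees (n - 2) n. (MI n (Dg (insert 0 S) 1) :: 'k mpoly set) \<inter> MI n (Dg (insert (n+1) S) 1))"
  proof (rule INF_cong[OF refl])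
    fix S assume "S \<in> subtrees (n - 2) n"
    then have S: "S \<subseteq> {1..n}" by (rule SV)
    show "I_face n 0 S \<inter> I_face n (n + 1) S = (MI n (Dg (insert 0 S) 1) :: 'k mpoly set) \<inter> MI n (Dg (insert (n+1) S) 1)"
    proof -
      have e0: "I_face n 0 S = (MI n (Dg (insert 0 S) 1) :: 'k mpoly set)" by (rule I_face_MI) (use S in auto)
      have e1: "I_face n (n+1) S = (MI n (Dg (insert (n+1) S) 1) :: 'k mpoly set)" by (rule I_face_MI) (use S in auto)
      show ?thesis unfolding e0 e1 ..
    qed
  qed
  have p1: "(SR_ideal_Bn n :: 'k::field mpoly set) = (\<Inter>S \<in> subtrees (n - 2) n. I_face n 0 S \<inter> I_face n (n + 1) S)"
    unfolding SR_MI c1 part1[OF n] RHS_char[OF n, of "\<lambda>A. MI n (Dg A 1)"] ..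
  have p2: "symb_pow (Rn n) (SR_ideal_Bn n :: 'k::field mpoly set) m
           = (\<Inter>S \<in> subtrees (n - 2) n.
                ideal_pow (Rn n) (I_face n 0 S) m \<inter> ideal_pow (Rn n) (I_face n (n + 1) S) m)" for m
  proof -
    have c2: "(\<Inter>S \<in> subtrees (n - 2) n. ideal_pow (Rn n) (I_face n 0 S) m \<inter> ideal_pow (Rn n) (I_face n (n + 1) S) m)
      = (\<Inter>S \<in> subtrees (n - 2) n. (MI n (Dg (insert 0 S) m) :: 'k mpoly set) \<inter> MI n (Dg (insert (n+1) S) m))"
    proof (rule INF_cong[OF refl])
      fix S assume "S \<in> subtrees (n - 2) n"
      then have S: "S \<subseteq> {1..n}" by (rule SV)
      then have fin: "finite S" using finite_subset by blast
      show "ideal_pow (Rn n) (I_face n 0 S) m \<inter> ideal_pow (Rn n) (I_face n (n + 1) S) m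
          = (MI n (Dg (insert 0 S) m) :: 'k mpoly set) \<inter> MI n (Dg (insert (n+1) S) m)"
      proof -
        have e0: "I_face n 0 S = (MI n (Dg (insert 0 S) 1) :: 'k mpoly set)" by (rule I_face_MI) (use S in auto)
        have e1: "I_face n (n+1) S = (MI n (Dg (insert (n+1) S) 1) :: 'k mpoly set)" by (rule I_face_MI) (use S in auto)
        have f0: "ideal_pow (Rn n) (MI n (Dg (insert 0 S) 1) :: 'k mpoly set) m = MI n (Dg (insert 0 S) m)"
          by (rule ideal_pow_Dg) (use fin in simp)
        have f1: "ideal_pow (Rn n) (MI n (Dg (insert (n+1) S) 1) :: 'k mpoly set) m = MI n (Dg (insert (n+1) S) m)"
          by (rule ideal_pow_Dg) (use fin in simp)
        show ?thesis unfolding e0 e1 f0 f1 ..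
      qed
    qed
    show ?thesis
      unfolding SR_MI c2 part2[OF n] RHS_char[OF n, of "\<lambda>A. MI n (Dg A m)"] ..
  qed
  show ?thesis using p1 p2 by blast
qed

end
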